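(* If $Q\in\mathcal{A}^{(0)}$, then $Q=c\,\mathcal{D}+\mathcal{L}$ for some $c\in\mathbb{R}$, where $\mathcal{D}=w\,\partial/\partial w+\sum_{j=1}^n\delta_jz_j\,\partial/\partial z_j$ and $\mathcal{L}=\sum_{j=1}^n \ell_j(z_1,\dots,z_n)\partial/\partial z_j$ is a vector field independent of $w$ with no $\partial/\partial w$ component.
   Context: Coordinates $(w,z)=(z_0,z_1,\dots,z_n)\in\mathbb{C}\times\mathbb{C}^n$, $w=u+iv$. Weights: $\delta_0=1$ for $w$, $\delta_j=1/(2m_j)$ ($m_j$ positive integers) for $z_j$; $\mathrm{wt}(z^J)=\sum_k j_k\delta_k$, $\mathrm{wt}(z^J\bar z^K)=\mathrm{wt}\,J+\mathrm{wt}\,K$. A holomorphic polynomial vector field $Q=\sum_{k=0}^n q_k\partial/\partial z_k$ is homogeneous of weight $\mu$ if each $q_k$ is zero or homogeneous of weight $\mu-\delta_k$. Standing assumptions: $p(z,\bar z)=\sum c_{A,B}z^A\bar z^B$ is a real polynomial on $\mathbb{C}^n$, homogeneous of weight 1, with no purely holomorphic or purely antiholomorphic monomials. $\Omega_{hom}=\{v+p(z,\bar z)<0\}$, and $\mathcal{A}^{(\mu)}$ is the set of holomorphic vector fields $Q=q_0\partial/\partial w+\sum_{j=1}^nq_j\partial/\partial z_j$ homogeneous of weight $\mu$ with $\mathrm{Re}\big(-\tfrac{i}{2}q_0+\sum_j q_j\partial p/\partial z_j\big)=0$ on $\partial\Omega_{hom}$. *)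

theory Defs
  imports "HOL-Analysis.Analysis"
begin

text \<open>Coordinates: w :: complex, z :: complex^'n (index type 'n of size n).
  Multi-indices are functions 'n \<Rightarrow> nat.  Weights: w has weight 1,
  z_j has weight delta m j = 1/(2 m_j).\<close>

definition delta :: "('n::finite \<Rightarrow> nat) \<Rightarrow> 'n \<Rightarrow> real" where
  "delta m j = 1 / (2 * real (m j))"

definition wt :: "('n::finite \<Rightarrow> nat) \<Rightarrow> ('n \<Rightarrow> nat) \<Rightarrow> real" where
  "wt m J = (\<Sum>i\<in>UNIV. real (J i) * delta m i)"

definition monom :: "('n::finite \<Rightarrow> nat) \<Rightarrow> complex^'n \<Rightarrow> complex" where
  "monom J z = (\<Prod>i\<in>UNIV. (z $ i) ^ (J i))"

definition is_hpoly :: "(nat \<Rightarrow> ('n::finite \<Rightarrow> nat) \<Rightarrow> complex) \<Rightarrow> bool" where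
  "is_hpoly a \<longleftrightarrow> finite {(k, J). a k J \<noteq> 0}"

definition hpoly_eval :: "(nat \<Rightarrow> ('n::finite \<Rightarrow> nat) \<Rightarrow> complex) \<Rightarrow> complex \<Rightarrow> complex^'n \<Rightarrow> complex" where
  "hpoly_eval a w z = (\<Sum>(k, J)\<in>{(k, J). a k J \<noteq> 0}. a k J * w ^ k * monom J z)"

definition hom_hpoly :: "('n::finite \<Rightarrow> nat) \<Rightarrow> real \<Rightarrow> (nat \<Rightarrow> ('n \<Rightarrow> nat) \<Rightarrow> complex) \<Rightarrow> bool" where
  "hom_hpoly m mu a \<longleftrightarrow> (\<forall>k J. a k J \<noteq> 0 \<longrightarrow> real k + wt m J = mu)"

text \<open>Holomorphic polynomial vector field Q = q0 d/dw + sum_j q j d/dz_j, homogeneous of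
  weight mu: q0 of weight mu + 1, q j of weight mu + delta_j.\<close>
definition hom_vf :: "('n::finite \<Rightarrow> nat) \<Rightarrow> real \<Rightarrow> (nat \<Rightarrow> ('n \<Rightarrow> nat) \<Rightarrow> complex)
     \<Rightarrow> ('n \<Rightarrow> nat \<Rightarrow> ('n \<Rightarrow> nat) \<Rightarrow> complex) \<Rightarrow> bool" where
  "hom_vf m mu q0 q \<longleftrightarrow> is_hpoly q0 \<and> (\<forall>j. is_hpoly (q j)) \<and>
     hom_hpoly m (mu + 1) q0 \<and> (\<forall>j. hom_hpoly m (mu + delta m j) (q j))"

definition rpoly_eval :: "(('n::finite \<Rightarrow> nat) \<Rightarrow> ('n \<Rightarrow> nat) \<Rightarrow> complex) \<Rightarrow> complex^'n \<Rightarrow> complex" where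
  "rpoly_eval c z = (\<Sum>(A, B)\<in>{(A, B). c A B \<noteq> 0}. c A B * monom A z * cnj (monom B z))"

definition rpoly_dz :: "(('n::finite \<Rightarrow> nat) \<Rightarrow> ('n \<Rightarrow> nat) \<Rightarrow> complex) \<Rightarrow> 'n \<Rightarrow> complex^'n \<Rightarrow> complex" where
  "rpoly_dz c j z = (\<Sum>(A, B)\<in>{(A, B). c A B \<noteq> 0}.
      c A B * of_nat (A j) * monom (A(j := A j - 1)) z * cnj (monom B z))"

definition std_p :: "('n::finite \<Rightarrow> nat) \<Rightarrow> (('n \<Rightarrow> nat) \<Rightarrow> ('n \<Rightarrow> nat) \<Rightarrow> complex) \<Rightarrow> bool" where
  "std_p m c \<longleftrightarrow> finite {(A, B). c A B \<noteq> 0}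
     \<and> (\<forall>z. Im (rpoly_eval c z) = 0)
     \<and> (\<forall>A B. c A B \<noteq> 0 \<longrightarrow> wt m A + wt m B = 1)
     \<and> (\<forall>A B. c A B \<noteq> 0 \<longrightarrow> A \<noteq> (\<lambda>_. 0) \<and> B \<noteq> (\<lambda>_. 0))"

definition Omega_hom :: "(('n::finite \<Rightarrow> nat) \<Rightarrow> ('n \<Rightarrow> nat) \<Rightarrow> complex) \<Rightarrow> (complex \<times> (complex^'n)) set" where
  "Omega_hom c = {(w, z). Im w + Re (rpoly_eval c z) < 0}"

definition in_A :: "('n::finite \<Rightarrow> nat) \<Rightarrow> (('n \<Rightarrow> nat) \<Rightarrow> ('n \<Rightarrow> nat) \<Rightarrow> complex) \<Rightarrow> real
     \<Rightarrow> (nat \<Rightarrow> ('n \<Rightarrow> nat) \<Rightarrow> complex) \<Rightarrow> ('n \<Rightarrow> nat \<Rightarrow> ('n \<Rightarrow> nat) \<Rightarrow> complex) \<Rightarrow> bool" where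
  "in_A m c mu q0 q \<longleftrightarrow> hom_vf m mu q0 q \<and>
     (\<forall>(w, z)\<in>frontier (Omega_hom c).
        Re (- (\<i> / 2) * hpoly_eval q0 w z + (\<Sum>j\<in>UNIV. hpoly_eval (q j) w z * rpoly_dz c j z)) = 0)"

end

theory Submission
  imports Defs
begin


lemma orth:
  fixes d :: int and M :: nat
  assumes M: "M > 0" and nd: "\<not> int M dvd d"
  shows "(\<Sum>k<M. cis (of_int d * (2 * pi * real k / real M))) = 0"
proof -
  define x where "x = cis (2 * pi * of_int d / real M)"
  have eq: "cis (of_int d * (2 * pi * real k / real M)) = x ^ k" for k
    unfolding x_def Complex.DeMoivre by (rule arg_cong[where f=cis]) (simp add: field_simps)
  have xM: "x ^ M = 1" unfolding x_def Complex.DeMoivre using M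
    by (simp add: field_simps) (metis cis_multiple_2pi Ints_of_int mult.assoc mult.commute)
  have "x \<noteq> 1"
  proof
    assume "x = 1"
    then have "exp (\<i> * complex_of_real (2 * pi * of_int d / real M)) = 1"
      unfolding x_def cis_conv_exp by simp
    then obtain n :: int where "2 * pi * of_int d / real M = of_int (2 * n) * pi"
      by (auto simp: exp_eq_1)
    then have "real_of_int d = of_int n * real M" using M by (simp add: field_simps)
    then have "d = n * int M" by (metis of_int_eq_iff of_int_mult of_int_of_nat_eq)
    with nd show False by simp
  qed
  then show ?thesis unfolding eq sum_gp_strict using xM by simp
qed

definition lowfreq :: "nat \<Rightarrow> (real \<Rightarrow> complex) \<Rightarrow> bool" where
  "lowfreq N G \<longleftrightarrow> (\<exists>a. \<forall>\<theta>. G \<theta> = (\<Sum>e\<in>{- int N<..<int N}. a e * cis (of_int e * \<theta>)))"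

lemma lf_zero: "lowfreq N (\<lambda>_. 0)"
  unfolding lowfreq_def by (rule exI[of _ "\<lambda>_. 0"]) simp

lemma lf_add: "lowfreq N F \<Longrightarrow> lowfreq N G \<Longrightarrow> lowfreq N (\<lambda>t. F t + G t)"
  unfolding lowfreq_def
  apply (elim exE)
  subgoal for a b by (rule exI[of _ "\<lambda>e. a e + b e"]) (simp add: distrib_right sum.distrib)
  done

lemma lf_scale: "lowfreq N F \<Longrightarrow> lowfreq N (\<lambda>t. b * F t)"
  unfolding lowfreq_def
  apply (elim exE)
  subgoal for a by (rule exI[of _ "\<lambda>e. b * a e"]) (simp add: sum_distrib_left mult.assoc)
  done

lemma lf_cis: "\<bar>e\<bar> < int N \<Longrightarrow> lowfreq N (\<lambda>t. cis (of_int e * t) * b)"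
  unfolding lowfreq_def
proof (intro exI allI)
  fix t assume e: "\<bar>e\<bar> < int N"
  have "(\<Sum>e'\<in>{- int N<..<int N}. (if e' = e then b else 0) * cis (of_int e' * t))
     = (\<Sum>e'\<in>{- int N<..<int N}. if e' = e then b * cis (of_int e * t) else 0)"
    by (rule sum.cong) auto
  also have "\<dots> = cis (of_int e * t) * b" using e by (auto simp: sum.delta' abs_less_iff)
  finally show "cis (of_int e * t) * b = (\<Sum>e'\<in>{- int N<..<int N}. (if e' = e then b else 0) * cis (of_int e' * t))"
    by simp
qed

lemma lf_sum: "(\<And>x. x \<in> S \<Longrightarrow> lowfreq N (g x)) \<Longrightarrow> lowfreq N (\<lambda>t. \<Sum>x\<in>S. g x t)"
proof (induction S rule: infinite_finite_induct)
  case (infinite A) then show ?case by (simp add: lf_zero)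
next
  case empty then show ?case by (simp add: lf_zero)
next
  case (insert x F)
  then show ?case by (simp add: lf_add)
qed

lemma lf_cnj: "lowfreq N F \<Longrightarrow> lowfreq N (\<lambda>t. cnj (F t))"
  unfolding lowfreq_def
proof (elim exE)
  fix a assume a: "\<forall>\<theta>. F \<theta> = (\<Sum>e\<in>{- int N<..<int N}. a e * cis (of_int e * \<theta>))"
  have "cnj (F t) = (\<Sum>e\<in>{- int N<..<int N}. cnj (a (- e)) * cis (of_int e * t))" for t
  proof -
    have "cnj (F t) = (\<Sum>e\<in>{- int N<..<int N}. cnj (a e) * cis (of_int (- e) * t))"
      using a by (simp add: cis_cnj)
    also have "\<dots> = (\<Sum>e\<in>uminus ` {- int N<..<int N}. cnj (a (- e)) * cis (of_int e * t))"
      by (subst sum.reindex) (auto simp: inj_on_def)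
    also have "uminus ` {- int N<..<int N} = {- int N<..<int N}"
      by (auto simp: image_iff intro!: exI[of _ "- _"])
    finally show ?thesis .
  qed
  then show "\<exists>a. \<forall>\<theta>. cnj (F \<theta>) = (\<Sum>e\<in>{- int N<..<int N}. a e * cis (of_int e * \<theta>))"
    by (intro exI[of _ "\<lambda>e. cnj (a (- e))"]) blast
qed

lemma lf_avg:
  assumes "lowfreq N G" "N > 0"
  shows "(\<Sum>k<4*N. cis (- (of_nat N * (2 * pi * real k / real (4*N)))) * G (2 * pi * real k / real (4*N))) = 0"
proof -
  obtain a where a: "\<And>t. G t = (\<Sum>e\<in>{- int N<..<int N}. a e * cis (of_int e * t))"
    using assms(1) unfolding lowfreq_def by blast
  have "(\<Sum>k<4*N. cis (- (of_nat N * (2 * pi * real k / real (4*N)))) * G (2 * pi * real k / real (4*N)))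
     = (\<Sum>e\<in>{- int N<..<int N}. a e * (\<Sum>k<4*N. cis (of_int (e - int N) * (2 * pi * real k / real (4*N)))))"
    unfolding a sum_distrib_left
    apply (subst sum.swap)
    apply (rule sum.cong[OF refl])+
  proof -
    fix e k
    have "cis (- (of_nat N * (2 * pi * real k / real (4*N)))) * cis (of_int e * (2 * pi * real k / real (4*N)))
      = cis (of_int (e - int N) * (2 * pi * real k / real (4*N)))"
      unfolding cis_mult using assms(2) by (intro arg_cong[where f=cis]) (simp add: field_simps)
    then show "cis (- (of_nat N * (2 * pi * real k / real (4*N)))) * (a e * cis (of_int e * (2 * pi * real k / real (4*N))))
      = a e * cis (of_int (e - int N) * (2 * pi * real k / real (4*N)))"
      by (metis mult.left_commute)
  qed
  also have "\<dots> = 0"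
  proof (rule sum.neutral, rule ballI)
    fix e assume e: "e \<in> {- int N<..<int N}"
    have "\<not> int (4*N) dvd (e - int N)"
    proof
      assume "int (4*N) dvd (e - int N)"
      then have "\<bar>int (4*N)\<bar> \<le> \<bar>e - int N\<bar>" using e by (intro dvd_imp_le_int) auto
      with e show False by auto
    qed
    then show "a e * (\<Sum>k<4*N. cis (of_int (e - int N) * (2 * pi * real k / real (4*N)))) = 0"
      using orth[of "4*N" "e - int N"] assms(2) by simp
  qed
  finally show ?thesis .
qed




lemma prod_cis: "(\<Prod>i\<in>S. cis (f i)) = cis (\<Sum>i\<in>S. f i)"
  by (induction S rule: infinite_finite_induct) (auto simp: cis_mult)

definition NN :: "('n::finite \<Rightarrow> nat) \<Rightarrow> nat" where "NN m = 2 * (\<Prod>i\<in>UNIV. m i)"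
definition ss :: "('n::finite \<Rightarrow> nat) \<Rightarrow> 'n \<Rightarrow> int" where "ss m i = int (\<Prod>k\<in>UNIV - {i}. m k)"
definition iwt :: "('n::finite \<Rightarrow> nat) \<Rightarrow> ('n \<Rightarrow> nat) \<Rightarrow> int" where
  "iwt m J = (\<Sum>i\<in>UNIV. int (J i) * ss m i)"
definition RR :: "('n::finite \<Rightarrow> nat) \<Rightarrow> real \<Rightarrow> complex^'n \<Rightarrow> complex^'n" where
  "RR m t z = (\<chi> i. cis (t * of_int (ss m i)) * z $ i)"

lemma NN_split0: "NN m = 2 * m i * (\<Prod>k\<in>UNIV - {i}. m k)"
  unfolding NN_def by (simp add: prod.remove[of UNIV i])

lemma NN_split: "real (NN m) = 2 * real (m i) * real_of_int (ss m i)"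
  unfolding NN_split0[of m i] ss_def by (simp del: of_nat_prod)

lemma ss_pos: assumes "\<forall>j. m j > 0" shows "ss m i \<ge> 1"
proof -
  have "0 < (\<Prod>k\<in>UNIV - {i}. m k)" using assms by (intro prod_pos) auto
  then have "1 \<le> (\<Prod>k\<in>UNIV - {i}. m k)" by linarith
  then have "int 1 \<le> int (\<Prod>k\<in>UNIV - {i}. m k)" by (simp only: of_nat_le_iff)
  then show ?thesis by (simp only: ss_def of_nat_1)
qed

lemma ss_nonneg: "\<forall>j. m j > 0 \<Longrightarrow> ss m i \<ge> 0"
  using ss_pos[of m i] by simp

lemma NN_pos: "\<forall>j. m j > 0 \<Longrightarrow> NN m > 0"
  unfolding NN_def by simp

lemma ss_real: assumes "\<forall>j. m j > 0" shows "real_of_int (ss m i) = real (NN m) * delta m i"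
proof -
  have "real (NN m) = 2 * real (m i) * real_of_int (ss m i)"
    using NN_split[of m i] by simp
  then show ?thesis unfolding delta_def using assms by (simp add: field_simps)
qed

lemma iwt_real: assumes "\<forall>j. m j > 0" shows "real_of_int (iwt m J) = real (NN m) * wt m J"
  unfolding iwt_def wt_def by (simp add: ss_real[OF assms] sum_distrib_left algebra_simps)

lemma iwt_nonneg: "\<forall>j. m j > 0 \<Longrightarrow> iwt m J \<ge> 0"
proof -
  assume a: "\<forall>j. m j > 0"
  show ?thesis unfolding iwt_def
  proof (intro sum_nonneg)
    fix i have "ss m i \<ge> 1" using ss_pos[OF a] by blast
    then show "int (J i) * ss m i \<ge> 0" by simp
  qed
qed

lemma iwt_pos: assumes "\<forall>j. m j > 0" "J \<noteq> (\<lambda>_. 0)" shows "iwt m J \<ge> 1"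
proof -
  obtain i where i: "J i \<noteq> 0" using assms(2) by auto
  have "1 \<le> int (J i) * ss m i" using i ss_pos[OF assms(1), of i]
    using mult_mono[of 1 "int (J i)" 1 "ss m i"] by simp
  also have "\<dots> \<le> iwt m J" unfolding iwt_def
    apply (rule member_le_sum) using ss_nonneg[OF assms(1)] by (auto intro: mult_nonneg_nonneg)
  finally show ?thesis .
qed

lemma monom_R: "monom J (RR m t z) = cis (t * of_int (iwt m J)) * monom J z"
proof -
  have "monom J (RR m t z) = (\<Prod>i\<in>UNIV. cis (real (J i) * (t * of_int (ss m i))) * (z $ i) ^ J i)"
    unfolding monom_def RR_def by (simp add: power_mult_distrib Complex.DeMoivre)
  also have "\<dots> = cis (\<Sum>i\<in>UNIV. real (J i) * (t * of_int (ss m i))) * monom J z"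
    unfolding monom_def prod.distrib prod_cis ..
  also have "(\<Sum>i\<in>UNIV. real (J i) * (t * of_int (ss m i))) = t * of_int (iwt m J)"
    unfolding iwt_def by (simp add: sum_distrib_left algebra_simps)
  finally show ?thesis .
qed

lemma RR_0: "RR m 0 z = z"
  unfolding RR_def by (simp add: vec_eq_iff)




lemma wt_nonneg: assumes "\<forall>j. m j > 0" shows "wt m J \<ge> 0"
proof -
  have "real_of_int (iwt m J) \<ge> 0" using iwt_nonneg[OF assms] by simp
  then have "real (NN m) * wt m J \<ge> 0" using iwt_real[OF assms] by simp
  then show ?thesis using NN_pos[OF assms] by (simp add: zero_le_mult_iff)
qed

lemma iwt_from_wt: assumes "\<forall>j. m j > 0" "wt m J = x" shows "real_of_int (iwt m J) = real (NN m) * x"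
  using iwt_real[OF assms(1)] assms(2) by simp

lemma q_deg:
  assumes mpos: "\<forall>j. m j > 0" and h: "hom_hpoly m (0 + delta m j) a" and nz: "a k J \<noteq> 0"
  shows "k = 0 \<and> iwt m J = ss m j"
proof -
  have e: "real k + wt m J = delta m j" using h nz unfolding hom_hpoly_def by simp
  have "delta m j \<le> 1/2" using mpos unfolding delta_def
    by (simp add: field_simps) (metis Suc_leI of_nat_1 of_nat_le_iff)
  then have k: "k = 0" using e wt_nonneg[OF mpos, of J] by linarith
  then have "wt m J = delta m j" using e by simp
  then have "real_of_int (iwt m J) = real_of_int (ss m j)"
    using iwt_from_wt[OF mpos] ss_real[OF mpos] by simp
  then show ?thesis using k by simp
qed

lemma iwt_zero: assumes "\<forall>j. m j > 0" "iwt m J = 0" shows "J = (\<lambda>_. 0)"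
  using iwt_pos[OF assms(1), of J] assms(2) by auto

lemma q0_deg:
  assumes mpos: "\<forall>j. m j > 0" and h: "hom_hpoly m (0 + 1) a" and nz: "a k J \<noteq> 0"
  shows "(k = 0 \<and> iwt m J = int (NN m)) \<or> (k = 1 \<and> J = (\<lambda>_. 0))"
proof -
  have e: "real k + wt m J = 1" using h nz unfolding hom_hpoly_def by simp
  then have "k \<le> 1" using wt_nonneg[OF mpos, of J] by linarith
  then consider "k = 0" | "k = 1" by linarith
  then show ?thesis
  proof cases
    case 1
    then have "wt m J = 1" using e by simp
    then have "real_of_int (iwt m J) = real (NN m)" using iwt_from_wt[OF mpos] by simp
    then show ?thesis using 1 by linarith
  next
    case 2
    then have "wt m J = 0" using e by simp
    then have "real_of_int (iwt m J) = 0" using iwt_from_wt[OF mpos] by simp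
    then show ?thesis using 2 iwt_zero[OF mpos] by simp
  qed
qed

lemma p_deg:
  assumes mpos: "\<forall>j. m j > 0" and std: "std_p m c" and nz: "c A B \<noteq> 0"
  shows "\<bar>iwt m A - iwt m B\<bar> < int (NN m)"
proof -
  have e: "wt m A + wt m B = 1" and nA: "A \<noteq> (\<lambda>_. 0)" and nB: "B \<noteq> (\<lambda>_. 0)"
    using std nz unfolding std_p_def by auto
  have "real_of_int (iwt m A + iwt m B) = real (NN m)"
  proof -
    have "real (NN m) * (wt m A + wt m B) = real (NN m)" using e by simp
    then show ?thesis using iwt_real[OF mpos, of A] iwt_real[OF mpos, of B] by (simp add: distrib_left)
  qed
  then have "iwt m A + iwt m B = int (NN m)" by linarith
  moreover have "iwt m A \<ge> 1" "iwt m B \<ge> 1" using iwt_pos[OF mpos] nA nB by auto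
  ultimately show ?thesis by linarith
qed

lemma iwt_dec: assumes "A j \<ge> 1" shows "iwt m (A(j := A j - 1)) = iwt m A - ss m j"
proof -
  define X where "X = (\<Sum>i\<in>UNIV - {j}. int (A i) * ss m i)"
  have h1: "iwt m (A(j := A j - 1)) = int (A j - 1) * ss m j + (\<Sum>i\<in>UNIV - {j}. int ((A(j := A j - 1)) i) * ss m i)"
    unfolding iwt_def by (subst sum.remove[of UNIV j]) auto
  have h2: "(\<Sum>i\<in>UNIV - {j}. int ((A(j := A j - 1)) i) * ss m i) = X"
    unfolding X_def by (rule sum.cong) auto
  have h3: "iwt m A = int (A j) * ss m j + X"
    unfolding iwt_def X_def by (subst sum.remove[of UNIV j]) auto
  have h4: "int (A j - 1) = int (A j) - 1" using assms by simp
  show ?thesis unfolding h1 h2 h3 h4 by (simp add: algebra_simps)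
qed

lemma cis3: "cis a * (C * (cis b * X) * cnj (cis d * Y)) = cis (a + b - d) * (C * X * cnj Y)"
proof -
  have "cis a * (C * (cis b * X) * cnj (cis d * Y)) = (cis a * cis b * cis (- d)) * (C * X * cnj Y)"
    by (simp add: cis_cnj)
  also have "cis a * cis b * cis (- d) = cis (a + b - d)" by (simp add: cis_mult)
  finally show ?thesis .
qed

lemma cis2: "C * (cis b * X) * cnj (cis d * Y) = cis (b - d) * (C * X * cnj Y)"
  using cis3[of 0 C b X d Y] by simp




lemma hq_R:
  assumes mpos: "\<forall>j. m j > 0" and h: "hom_hpoly m (0 + delta m j) a"
  shows "hpoly_eval a w (RR m t z) = cis (t * of_int (ss m j)) * hpoly_eval a 0 z"
  unfolding hpoly_eval_def sum_distrib_left
proof (rule sum.cong[OF refl])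
  fix x assume x: "x \<in> {(k, J). a k J \<noteq> 0}"
  obtain k J where kJ: "x = (k, J)" by (cases x)
  with x have "a k J \<noteq> 0" by simp
  from q_deg[OF mpos h this] have "k = 0" "iwt m J = ss m j" by auto
  then show "(case x of (k, J) \<Rightarrow> a k J * w ^ k * monom J (RR m t z)) =
         cis (t * of_int (ss m j)) * (case x of (k, J) \<Rightarrow> a k J * 0 ^ k * monom J z)"
    unfolding kJ by (simp add: monom_R)
qed

lemma monom_0: "monom (\<lambda>_. 0) z = 1"
  unfolding monom_def by simp

lemma hq0_split:
  assumes mpos: "\<forall>j. m j > 0" and h: "hom_hpoly m (0 + 1) a" and fin: "is_hpoly a"
  shows "hpoly_eval a w z = a 1 (\<lambda>_. 0) * w + hpoly_eval a 0 z"
proof -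
  let ?S = "{(k, J). a k J \<noteq> 0}"
  have "hpoly_eval a w z = (\<Sum>x\<in>?S. (if x = (1, \<lambda>_. 0) then a 1 (\<lambda>_. 0) * w else 0)
                     + (case x of (k, J) \<Rightarrow> a k J * 0 ^ k * monom J z))"
    unfolding hpoly_eval_def
  proof (rule sum.cong[OF refl])
    fix x assume x: "x \<in> ?S"
    obtain k J where kJ: "x = (k, J)" by (cases x)
    with x have "a k J \<noteq> 0" by simp
    from q0_deg[OF mpos h this]
    show "(case x of (k, J) \<Rightarrow> a k J * w ^ k * monom J z) =
       (if x = (1, \<lambda>_. 0) then a 1 (\<lambda>_. 0) * w else 0) + (case x of (k, J) \<Rightarrow> a k J * 0 ^ k * monom J z)"
      unfolding kJ by (auto simp: monom_0)
  qed
  also have "\<dots> = (\<Sum>x\<in>?S. if x = (1, \<lambda>_. 0) then a 1 (\<lambda>_. 0) * w else 0) + hpoly_eval a 0 z"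
    unfolding hpoly_eval_def sum.distrib ..
  also have "(\<Sum>x\<in>?S. if x = (1, \<lambda>_. 0) then a 1 (\<lambda>_. 0) * w else 0) = a 1 (\<lambda>_. 0) * w"
    using fin unfolding is_hpoly_def by (simp add: sum.delta)
  finally show ?thesis .
qed

lemma f_R:
  assumes mpos: "\<forall>j. m j > 0" and h: "hom_hpoly m (0 + 1) a"
  shows "hpoly_eval a 0 (RR m t z) = cis (t * real (NN m)) * hpoly_eval a 0 z"
  unfolding hpoly_eval_def sum_distrib_left
proof (rule sum.cong[OF refl])
  fix x assume x: "x \<in> {(k, J). a k J \<noteq> 0}"
  obtain k J where kJ: "x = (k, J)" by (cases x)
  with x have "a k J \<noteq> 0" by simp
  from q0_deg[OF mpos h this]
  show "(case x of (k, J) \<Rightarrow> a k J * 0 ^ k * monom J (RR m t z)) =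
         cis (t * real (NN m)) * (case x of (k, J) \<Rightarrow> a k J * 0 ^ k * monom J z)"
    unfolding kJ by (auto simp: monom_R)
qed

lemma G_lf:
  assumes mpos: "\<forall>j. m j > 0" and std: "std_p m c"
  shows "lowfreq (NN m) (\<lambda>t. rpoly_eval c (RR m t z))"
proof -
  let ?S = "{(A, B). c A B \<noteq> 0}"
  have eq: "rpoly_eval c (RR m t z) = (\<Sum>x\<in>?S. cis (of_int (iwt m (fst x) - iwt m (snd x)) * t) *
      (c (fst x) (snd x) * monom (fst x) z * cnj (monom (snd x) z)))" for t
    unfolding rpoly_eval_def
  proof (rule sum.cong[OF refl])
    fix x assume x: "x \<in> ?S"
    obtain A B where kJ: "x = (A, B)" by (cases x)
    have "c A B * monom A (RR m t z) * cnj (monom B (RR m t z))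
        = cis (t * of_int (iwt m A) - t * of_int (iwt m B)) * (c A B * monom A z * cnj (monom B z))"
      unfolding monom_R by (rule cis2)
    also have "t * of_int (iwt m A) - t * of_int (iwt m B) = of_int (iwt m A - iwt m B) * t"
      by (simp add: algebra_simps)
    finally show "(case x of (A, B) \<Rightarrow> c A B * monom A (RR m t z) * cnj (monom B (RR m t z))) =
         cis (of_int (iwt m (fst x) - iwt m (snd x)) * t) * (c (fst x) (snd x) * monom (fst x) z * cnj (monom (snd x) z))"
      unfolding kJ by simp
  qed
  show ?thesis unfolding eq
    by (rule lf_sum, rule lf_cis) (use p_deg[OF mpos std] in auto)
qed

lemma D_lf:
  assumes mpos: "\<forall>j. m j > 0" and std: "std_p m c"
  shows "lowfreq (NN m) (\<lambda>t. cis (t * of_int (ss m j)) * rpoly_dz c j (RR m t z))"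
proof -
  let ?S = "{(A, B). c A B \<noteq> 0}"
  have eq: "cis (t * of_int (ss m j)) * rpoly_dz c j (RR m t z) = (\<Sum>x\<in>?S. cis (of_int (iwt m (fst x) - iwt m (snd x)) * t) *
      (c (fst x) (snd x) * of_nat (fst x j) * monom ((fst x)(j := fst x j - 1)) z * cnj (monom (snd x) z)))" for t
    unfolding rpoly_dz_def sum_distrib_left
  proof (rule sum.cong[OF refl])
    fix x assume x: "x \<in> ?S"
    obtain A B where kJ: "x = (A, B)" by (cases x)
    have "cis (t * of_int (ss m j)) * (c A B * of_nat (A j) * monom (A(j := A j - 1)) (RR m t z) * cnj (monom B (RR m t z)))
        = cis (of_int (iwt m A - iwt m B) * t) * (c A B * of_nat (A j) * monom (A(j := A j - 1)) z * cnj (monom B z))"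
    proof (cases "A j = 0")
      case True then show ?thesis by simp
    next
      case False
      then have d: "iwt m (A(j := A j - 1)) = iwt m A - ss m j" by (intro iwt_dec) simp
      have "cis (t * of_int (ss m j)) * (c A B * of_nat (A j) * monom (A(j := A j - 1)) (RR m t z) * cnj (monom B (RR m t z)))
        = cis (t * of_int (ss m j) + t * of_int (iwt m (A(j := A j - 1))) - t * of_int (iwt m B)) *
           (c A B * of_nat (A j) * monom (A(j := A j - 1)) z * cnj (monom B z))"
        unfolding monom_R by (rule cis3)
      also have "t * of_int (ss m j) + t * of_int (iwt m (A(j := A j - 1))) - t * of_int (iwt m B)
           = of_int (iwt m A - iwt m B) * t"
        unfolding d by (simp add: algebra_simps)
      finally show ?thesis .
    qed
    then show "cis (t * of_int (ss m j)) * (case x of (A, B) \<Rightarrow> c A B * of_nat (A j) * monom (A(j := A j - 1)) (RR m t z) * cnj (monom B (RR m t z))) =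
         cis (of_int (iwt m (fst x) - iwt m (snd x)) * t) * (c (fst x) (snd x) * of_nat (fst x j) * monom ((fst x)(j := fst x j - 1)) z * cnj (monom (snd x) z))"
      unfolding kJ by simp
  qed
  show ?thesis unfolding eq
    by (rule lf_sum, rule lf_cis) (use p_deg[OF mpos std] in auto)
qed




lemma bd_frontier:
  assumes "Im w + Re (rpoly_eval c z) = 0"
  shows "(w, z) \<in> frontier (Omega_hom c)"
proof -
  have nin: "(w, z) \<notin> Omega_hom c" using assms unfolding Omega_hom_def by simp
  have "(w, z) \<in> closure (Omega_hom c)"
    unfolding closure_approachable
  proof (intro allI impI)
    fix e :: real assume e: "e > 0"
    let ?y = "(w - \<i> * of_real (e/2), z)"
    have "?y \<in> Omega_hom c" using assms e unfolding Omega_hom_def by simp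
    moreover have "dist ?y (w, z) = e/2"
      using e by (simp add: dist_Pair_Pair dist_norm norm_mult)
    ultimately show "\<exists>y\<in>Omega_hom c. dist y (w, z) < e" using e by (intro bexI[of _ ?y]) auto
  qed
  then show ?thesis unfolding frontier_def using nin interior_subset by blast
qed

theorem lemma3p1:
  fixes m :: "'n::finite \<Rightarrow> nat"
    and c :: "('n \<Rightarrow> nat) \<Rightarrow> ('n \<Rightarrow> nat) \<Rightarrow> complex"
    and q0 :: "nat \<Rightarrow> ('n \<Rightarrow> nat) \<Rightarrow> complex"
    and q :: "'n \<Rightarrow> nat \<Rightarrow> ('n \<Rightarrow> nat) \<Rightarrow> complex"
  assumes "\<forall>j. m j > 0"
    and "std_p m c"
    and "in_A m c 0 q0 q"
  shows "\<exists>r::real. \<exists>l :: 'n \<Rightarrow> complex^'n \<Rightarrow> complex. \<forall>w z.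
           hpoly_eval q0 w z = of_real r * w \<and>
           (\<forall>j. hpoly_eval (q j) w z = of_real r * of_real (delta m j) * z $ j + l j z)"
proof -
  note mpos = assms(1) and std = assms(2)
  have h0: "hom_hpoly m (0 + 1) q0" and hj: "\<And>j. hom_hpoly m (0 + delta m j) (q j)"
    and fin0: "is_hpoly q0"
    using assms(3) unfolding in_A_def hom_vf_def by auto
  have bdA: "\<forall>(w, z)\<in>frontier (Omega_hom c).
        Re (- (\<i> / 2) * hpoly_eval q0 w z + (\<Sum>j\<in>UNIV. hpoly_eval (q j) w z * rpoly_dz c j z)) = 0"
    using assms(3) unfolding in_A_def by (rule conjunct2)
  have cond: "Re (- (\<i> / 2) * hpoly_eval q0 w z + (\<Sum>j\<in>UNIV. hpoly_eval (q j) w z * rpoly_dz c j z)) = 0"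
    if "Im w + Re (rpoly_eval c z) = 0" for w z
    using bspec[OF bdA bd_frontier[OF that]] by (simp only: case_prod_conv)
  define a where "a = q0 1 (\<lambda>_. 0)"
  define f where "f z = hpoly_eval q0 0 z" for z
  have split: "hpoly_eval q0 w z = a * w + f z" for w z
    unfolding a_def f_def by (rule hq0_split[OF mpos h0 fin0])
  have qw: "hpoly_eval (q j) w z = hpoly_eval (q j) 0 z" for j w z
    using hq_R[OF mpos hj, of j w 0 z] by (simp add: RR_0)
  have qsum: "(\<Sum>j\<in>UNIV. hpoly_eval (q j) w z * D j) = (\<Sum>j\<in>UNIV. hpoly_eval (q j) 0 z * D j)" for w z D
    by (rule sum.cong[OF refl]) (subst qw, rule refl)
  have ima: "Im a = 0"
  proof -
    define z0 :: "complex^'n" where "z0 = 0"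
    define P where "P = Re (rpoly_eval c z0)"
    define T where "T = (\<Sum>j\<in>UNIV. hpoly_eval (q j) 0 z0 * rpoly_dz c j z0)"
    have E: "Re (- (\<i> / 2) * (a * w + f z0) + T) = 0" if "Im w = - P" for w
    proof -
      have "Im w + Re (rpoly_eval c z0) = 0" using that unfolding P_def by simp
      from cond[OF this] show ?thesis unfolding split qsum[of w z0] T_def .
    qed
    have gen: "Re (- (\<i> / 2) * (a * w + X) + Y) = (Re a * Im w + Im a * Re w) / 2 + Re (- (\<i> / 2) * X) + Re Y" for w X Y
      by (simp add: field_simps)
    have "Re (- (\<i> / 2) * (a * Complex 1 (- P) + f z0) + T) - Re (- (\<i> / 2) * (a * Complex 0 (- P) + f z0) + T) = Im a / 2"
      unfolding gen by (simp add: field_simps)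
    then show ?thesis using E[of "Complex 1 (- P)"] E[of "Complex 0 (- P)"] by simp
  qed
  define r where "r = Re a"
  have ar: "a = of_real r" unfolding r_def using ima by (simp add: complex_eq_iff)
  define N where "N = NN m"
  have Npos: "N > 0" unfolding N_def using NN_pos[OF mpos] .
  have f0: "f z = 0" for z
  proof -
    define G where "G t = rpoly_eval c (RR m t z)" for t
    define L where "L t = of_real (- r / 4) * (G t + cnj (G t)) +
        (\<Sum>j\<in>UNIV. hpoly_eval (q j) 0 z * (cis (t * of_int (ss m j)) * rpoly_dz c j (RR m t z)))" for t
    have lfG: "lowfreq (NN m) G" unfolding G_def by (rule G_lf[OF mpos std])
    have lfL: "lowfreq N L"
      unfolding L_def N_def
      apply (rule lf_add)
       apply (rule lf_scale, rule lf_add, rule lfG, rule lf_cnj, rule lfG)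
      apply (rule lf_sum, rule lf_scale, rule D_lf[OF mpos std])
      done
    define L2 where "L2 t = L t + cnj (L t)" for t
    have lfL2: "lowfreq N L2" unfolding L2_def by (rule lf_add[OF lfL lf_cnj[OF lfL]])
    have key: "- (\<i> / 2) * cis (t * real N) * f z + (\<i> / 2) * cis (- (t * real N)) * cnj (f z) + L2 t = 0" for t
    proof -
      define P where "P = Re (G t)"
      define w where "w = Complex 0 (- P)"
      define \<Phi> where "\<Phi> = - (\<i> / 2) * hpoly_eval q0 w (RR m t z) + (\<Sum>j\<in>UNIV. hpoly_eval (q j) w (RR m t z) * rpoly_dz c j (RR m t z))"
      have "Re \<Phi> = 0" unfolding \<Phi>_def by (rule cond) (simp add: w_def P_def G_def)
      then have z: "\<Phi> + cnj \<Phi> = 0" by (simp add: complex_add_cnj)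
      have GP: "G t + cnj (G t) = of_real (2 * P)" unfolding P_def by (rule complex_add_cnj)
      have hA: "- (\<i> / 2) * (a * w) = of_real (- r / 4) * (G t + cnj (G t))"
        unfolding GP ar w_def by (simp add: complex_eq_iff)
      have fR: "f (RR m t z) = cis (t * real N) * f z"
        unfolding f_def N_def by (rule f_R[OF mpos h0])
      have s1: "(\<Sum>j\<in>UNIV. hpoly_eval (q j) w (RR m t z) * rpoly_dz c j (RR m t z))
          = (\<Sum>j\<in>UNIV. hpoly_eval (q j) 0 z * (cis (t * of_int (ss m j)) * rpoly_dz c j (RR m t z)))"
        by (rule sum.cong[OF refl]) (simp add: hq_R[OF mpos hj] mult_ac)
      have "\<Phi> = - (\<i> / 2) * (a * w) + - (\<i> / 2) * cis (t * real N) * f z +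
          (\<Sum>j\<in>UNIV. hpoly_eval (q j) 0 z * (cis (t * of_int (ss m j)) * rpoly_dz c j (RR m t z)))"
        unfolding \<Phi>_def split fR s1 by (simp add: algebra_simps)
      then have eqPhi: "\<Phi> = - (\<i> / 2) * cis (t * real N) * f z + L t"
        unfolding hA L_def by (simp add: algebra_simps)
      have c1: "cnj (- (\<i> / 2) * cis (t * real N) * f z) = (\<i> / 2) * cis (- (t * real N)) * cnj (f z)"
        by (simp add: cis_cnj)
      show ?thesis using z unfolding eqPhi complex_cnj_add c1 L2_def by (simp add: algebra_simps)
    qed
    define th where "th k = 2 * pi * real k / real (4*N)" for k
    have "0 = (\<Sum>k<4*N. cis (- (of_nat N * th k)) *
        (- (\<i> / 2) * cis (th k * real N) * f z + (\<i> / 2) * cis (- (th k * real N)) * cnj (f z) + L2 (th k)))"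
      unfolding key by simp
    also have "\<dots> = (\<Sum>k<4*N. - (\<i> / 2) * f z) + (\<i> / 2) * cnj (f z) * (\<Sum>k<4*N. cis (of_int (- 2 * int N) * th k))
        + (\<Sum>k<4*N. cis (- (of_nat N * th k)) * L2 (th k))"
    proof -
      have a1: "cis (- (of_nat N * th k)) * cis (th k * real N) = 1" for k
        unfolding cis_mult by simp
      have a2: "cis (- (of_nat N * th k)) * cis (- (th k * real N)) = cis (of_int (- 2 * int N) * th k)" for k
        unfolding cis_mult by (rule arg_cong[where f=cis]) simp
      have g: "x * (- (\<i> / 2) * y * F + (\<i> / 2) * u * G + L) = - (\<i> / 2) * F * (x * y) + (\<i> / 2) * G * (x * u) + x * L"
        for x y u F G L :: complex by (simp add: algebra_simps)
      show ?thesis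
        unfolding g a1 a2 sum.distrib sum_distrib_left by simp
    qed
    finally have sum3: "0 = (\<Sum>k<4*N. - (\<i> / 2) * f z) + (\<i> / 2) * cnj (f z) * (\<Sum>k<4*N. cis (of_int (- 2 * int N) * th k))
        + (\<Sum>k<4*N. cis (- (of_nat N * th k)) * L2 (th k))" .
    have S2: "(\<Sum>k<4*N. cis (of_int (- 2 * int N) * th k)) = 0"
      unfolding th_def
    proof (rule orth)
      show "4 * N > 0" using Npos by simp
      show "\<not> int (4 * N) dvd - 2 * int N"
      proof
        assume "int (4 * N) dvd - 2 * int N"
        then have "\<bar>int (4*N)\<bar> \<le> \<bar>- 2 * int N\<bar>" using Npos by (intro dvd_imp_le_int) auto
        with Npos show False by simp
      qed
    qed
    have S3: "(\<Sum>k<4*N. cis (- (of_nat N * th k)) * L2 (th k)) = 0"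
      unfolding th_def by (rule lf_avg[OF lfL2 Npos])
    have "0 = of_nat (4*N) * (- (\<i> / 2) * f z)" using sum3 unfolding S2 S3 by simp
    then show ?thesis using Npos by simp
  qed
  show ?thesis
  proof (intro exI allI conjI)
    fix w z j
    show "hpoly_eval q0 w z = of_real r * w" unfolding split f0 ar by simp
    show "hpoly_eval (q j) w z = of_real r * of_real (delta m j) * z $ j +
       (\<lambda>j z. hpoly_eval (q j) 0 z - of_real r * of_real (delta m j) * z $ j) j z"
      using qw[of j w z] by simp
  qed
qed


end
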